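(* Let $d\ge 1$ be an integer, let $\mathcal{P}\subset\mathbb{R}^d$ be a nonempty convex polytope all of whose vertices lie in $\mathbb{Z}^d$, let $p$ be a prime number, and let $l=\lfloor \log_p d\rfloor$. Then for every natural number $k>l$, the number of points of $\mathbb{Z}^d$ contained in $p^k\mathcal{P}$ is congruent to $1$ modulo $p^{k-l}$.
   Context: For a set $X\subseteq\mathbb{R}^d$ and $t>0$, $tX=\{tx : x\in X\}$ denotes the image of $X$ under the homothety with center at the origin and ratio $t$. $\lfloor x\rfloor$ denotes the integer part of $x$. *)

theory Defs
  imports "HOL-Analysis.Analysis" "HOL-Number_Theory.Cong"
begin

definition lattice_points :: "(real ^ 'n::finite) set" where
  "lattice_points = {x. \<forall>i. x $ i \<in> \<int>}"

end

theory Submission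
  imports Defs
begin


definition fd :: "(nat \<Rightarrow> int) \<Rightarrow> nat \<Rightarrow> int" where
  "fd f t = f (Suc t) - f t"

lemma fd_zero_iter:
  assumes "\<forall>t. (fd ^^ N) f t = 0"
  shows "\<forall>t. (fd ^^ N) (fd f) t = 0"
proof -
  have "(fd ^^ N) (fd f) = (fd ^^ Suc N) f" by (simp only: funpow_Suc_right o_def)
  also have "\<dots> = fd ((fd ^^ N) f)" by simp
  finally show ?thesis using assms by (simp add: fd_def)
qed

lemma newton:
  assumes "\<forall>t. (fd ^^ N) f t = 0"
  shows "f n = (\<Sum>i<N. (fd ^^ i) f 0 * int (n choose i))"
  using assms
proof (induction n arbitrary: f)
  case 0
  then show ?case
  proof (cases N)
    case 0
    then show ?thesis using "0.prems" by simp
  next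
    case (Suc M)
    then show ?thesis by (simp add: sum.lessThan_Suc_shift del: sum.lessThan_Suc)
  qed
next
  case (Suc n)
  show ?case
  proof (cases N)
    case 0
    then show ?thesis using Suc.prems by simp
  next
    case (Suc M)
    have h1: "f n = (\<Sum>i<N. (fd ^^ i) f 0 * int (n choose i))" using Suc.IH Suc.prems by blast
    have h2: "fd f n = (\<Sum>i<N. (fd ^^ i) (fd f) 0 * int (n choose i))"
      using Suc.IH[of "fd f"] fd_zero_iter[OF Suc.prems] by blast
    have z: "(fd ^^ N) f 0 = 0" using Suc.prems by blast
    have e: "(fd ^^ i) (fd f) = (fd ^^ Suc i) f" for i by (simp only: funpow_Suc_right o_def)
    have "f (Suc n) = f n + fd f n" by (simp add: fd_def)
    also have "\<dots> = (\<Sum>i<Suc M. (fd ^^ i) f 0 * int (n choose i)) + (\<Sum>i<Suc M. (fd ^^ Suc i) f 0 * int (n choose i))"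
      using h1 h2 Suc e by simp
    also have "(\<Sum>i<Suc M. (fd ^^ Suc i) f 0 * int (n choose i)) = (\<Sum>i<M. (fd ^^ Suc i) f 0 * int (n choose i))"
      using z Suc by simp
    also have "(\<Sum>i<Suc M. (fd ^^ i) f 0 * int (n choose i)) + (\<Sum>i<M. (fd ^^ Suc i) f 0 * int (n choose i))
       = (\<Sum>i<Suc M. (fd ^^ i) f 0 * int (Suc n choose i))"
      by (simp only: sum.lessThan_Suc_shift binomial_Suc_Suc of_nat_add distrib_left sum.distrib) simp
    finally show ?thesis using Suc by simp
  qed
qed

lemma padic_binom:
  fixes p k l i :: nat
  assumes p: "prime p" and i: "1 \<le> i" "i < p ^ Suc l" and lk: "l < k"
  shows "p ^ (k - l) dvd (p ^ k choose i)"
proof (cases "i \<le> p ^ k")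
  case False
  then show ?thesis by (simp add: binomial_eq_0)
next
  case True
  obtain j where j: "i = Suc j" using i by (cases i) auto
  obtain q where q: "p ^ k = Suc q" using p by (metis not0_implies_Suc power_not_zero prime_gt_0_nat not_gr_zero)
  have key: "i * (p ^ k choose i) = p ^ k * (q choose j)"
    unfolding j q by (rule Suc_times_binomial)
  define e where "e = multiplicity p i"
  have pp: "\<not> is_unit p" using p by (simp add: prime_nat_iff)
  have i0: "i \<noteq> 0" using i by simp
  obtain m where m: "i = p ^ e * m" "\<not> p dvd m"
    using multiplicity_decompose'[OF i0 pp] e_def by metis
  have m0: "m > 0" using m i0 by (cases m) auto
  have "p ^ e \<le> i" using m m0 by (simp add: mult_le_cancel1)  
  then have "p ^ e < p ^ Suc l" using i by simp
  then have "e < Suc l" using p by (metis power_less_imp_less_exp prime_gt_1_nat)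
  then have el: "e \<le> l" by simp
  have pk: "p ^ k = p ^ e * p ^ (k - e)" using el lk by (simp flip: power_add)
  have "p ^ e * (m * (p ^ k choose i)) = p ^ e * (p ^ (k - e) * (q choose j))"
    using key m pk by (simp add: ac_simps)
  then have "m * (p ^ k choose i) = p ^ (k - e) * (q choose j)"
    using p by (simp add: prime_gt_0_nat)
  then have "p ^ (k - e) dvd m * (p ^ k choose i)" by (metis dvd_triv_left)
  moreover have "coprime (p ^ (k - e)) m"
    using m p by (simp add: prime_imp_coprime coprime_power_left_iff)
  ultimately have "p ^ (k - e) dvd (p ^ k choose i)" using coprime_dvd_mult_right_iff by blast
  moreover have "p ^ (k - l) dvd p ^ (k - e)" using el by (simp add: le_imp_power_dvd)
  ultimately show ?thesis using dvd_trans by blast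
qed


definition L :: "(real ^ 'n::finite) set \<Rightarrow> nat \<Rightarrow> int" where
  "L X t = int (card (lattice_points \<inter> (\<lambda>x. real t *\<^sub>R x) ` X))"

lemma lattice_add: "x \<in> lattice_points \<Longrightarrow> y \<in> lattice_points \<Longrightarrow> x + y \<in> lattice_points"
  by (auto simp: lattice_points_def)
lemma lattice_diff: "x \<in> lattice_points \<Longrightarrow> y \<in> lattice_points \<Longrightarrow> x - y \<in> lattice_points"
  by (auto simp: lattice_points_def)
lemma lattice_zero: "0 \<in> lattice_points"
  by (auto simp: lattice_points_def)

lemma finite_lattice_bounded:
  fixes S :: "(real ^ 'n::finite) set"
  assumes "bounded S"
  shows "finite (lattice_points \<inter> S)"
proof -
  obtain B where B: "\<And>x. x \<in> S \<Longrightarrow> norm x \<le> B" using assms bounded_iff by blast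
  define N where "N = \<lceil>B\<rceil>"
  have fin: "finite (Pi\<^sub>E (UNIV::'n set) (\<lambda>_. {-N..N}))" by (rule finite_PiE) auto
  have "lattice_points \<inter> S \<subseteq> (\<lambda>f. \<chi> i. real_of_int (f i)) ` Pi\<^sub>E UNIV (\<lambda>_. {-N..N})"
  proof
    fix x assume x: "x \<in> lattice_points \<inter> S"
    have "\<forall>i. \<exists>z. x $ i = real_of_int z"
      using x by (auto simp: lattice_points_def elim!: Ints_cases)
    then obtain f where fi: "\<And>i. x $ i = real_of_int (f i)" by metis
    have ab: "\<bar>x $ i\<bar> \<le> B" for i using B[of x] x component_le_norm_cart[of x i] by auto
    have "f i \<in> {-N..N}" for i
    proof -
      have "real_of_int (f i) \<le> B" "real_of_int (- f i) \<le> B" using ab[of i] fi[of i] by auto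
      moreover have c: "B \<le> real_of_int N" unfolding N_def by (rule le_of_int_ceiling)
      ultimately have "real_of_int (f i) \<le> real_of_int N" "real_of_int (- f i) \<le> real_of_int N"
        by linarith+
      then show ?thesis by simp
    qed
    then have "f \<in> Pi\<^sub>E UNIV (\<lambda>_. {-N..N})" by (simp add: PiE_UNIV_domain)
    moreover have "x = (\<chi> i. real_of_int (f i))" by (simp add: vec_eq_iff fi)
    ultimately show "x \<in> (\<lambda>f. \<chi> i. real_of_int (f i)) ` Pi\<^sub>E UNIV (\<lambda>_. {-N..N})" by blast
  qed
  then show ?thesis using fin finite_subset by blast
qed

lemma lattice_sum:
  assumes "finite V" "\<And>v. v \<in> V \<Longrightarrow> f v \<in> lattice_points"
  shows "sum f V \<in> lattice_points"
  using assms by (induction V rule: finite_induct) (auto simp: lattice_zero lattice_add)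

definition nb :: "(nat \<Rightarrow> int) \<Rightarrow> nat \<Rightarrow> int" where
  "nb g s = (if s = 0 then g 0 else g s - g (s - 1))"

lemma nb_shift: "(nb ^^ j) g (s + j) = (fd ^^ j) g s"
proof (induction j arbitrary: s)
  case 0 then show ?case by simp
next
  case (Suc j)
  have "(nb ^^ Suc j) g (s + Suc j) = (nb ^^ j) g (Suc s + j) - (nb ^^ j) g (s + j)"
    by (simp add: nb_def)
  also have "\<dots> = (fd ^^ j) g (Suc s) - (fd ^^ j) g s" using Suc.IH[of "Suc s"] Suc.IH[of s] by simp
  moreover have "(fd ^^ Suc j) g s = (fd ^^ j) g (Suc s) - (fd ^^ j) g s"
    by (simp only: funpow.simps o_apply fd_def)
  ultimately show ?case by simp
qed

context
  fixes V :: "(real ^ 'n::finite) set"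
  assumes finV: "finite V" and neV: "V \<noteq> {}" and indV: "\<not> affine_dependent V"
    and latV: "V \<subseteq> lattice_points"
begin

definition M :: "nat \<Rightarrow> ((real ^ 'n) \<Rightarrow> real) set" where
  "M s = {\<mu>. \<mu> \<in> extensional V \<and> (\<forall>v\<in>V. 0 \<le> \<mu> v) \<and> sum \<mu> V = real s
              \<and> (\<Sum>v\<in>V. \<mu> v *\<^sub>R v) \<in> lattice_points}"

lemma M_bij: "bij_betw (\<lambda>\<mu>. \<Sum>v\<in>V. \<mu> v *\<^sub>R v) (M s) (lattice_points \<inter> (\<lambda>x. real s *\<^sub>R x) ` (convex hull V))"
proof -
  have inj: "inj_on (\<lambda>\<mu>. \<Sum>v\<in>V. \<mu> v *\<^sub>R v) (M s)"
  proof (rule inj_onI)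
    fix \<mu> \<nu> assume m: "\<mu> \<in> M s" "\<nu> \<in> M s" and eq: "(\<Sum>v\<in>V. \<mu> v *\<^sub>R v) = (\<Sum>v\<in>V. \<nu> v *\<^sub>R v)"
    define U where "U v = \<mu> v - \<nu> v" for v
    have "sum U V = 0" using m by (simp add: M_def U_def sum_subtractf)
    moreover have "(\<Sum>v\<in>V. U v *\<^sub>R v) = 0" using eq by (simp add: U_def scaleR_diff_left sum_subtractf)
    ultimately have "\<forall>v\<in>V. U v = 0" using indV affine_dependent_explicit_finite[OF finV] by blast
    then show "\<mu> = \<nu>" using m by (intro extensionalityI[of _ V]) (auto simp: M_def U_def)
  qed
  have img: "(\<lambda>\<mu>. \<Sum>v\<in>V. \<mu> v *\<^sub>R v) ` M s = lattice_points \<inter> (\<lambda>x. real s *\<^sub>R x) ` (convex hull V)"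
  proof (intro equalityI subsetI)
    fix y assume "y \<in> (\<lambda>\<mu>. \<Sum>v\<in>V. \<mu> v *\<^sub>R v) ` M s"
    then obtain \<mu> where m: "\<mu> \<in> M s" and y: "y = (\<Sum>v\<in>V. \<mu> v *\<^sub>R v)" by blast
    have "y \<in> (\<lambda>x. real s *\<^sub>R x) ` (convex hull V)"
    proof (cases "s = 0")
      case True
      then have "\<forall>v\<in>V. \<mu> v = 0" using m finV sum_nonneg_eq_0_iff[of V \<mu>] by (auto simp: M_def)
      then have "y = 0" using y by simp
      moreover obtain x where "x \<in> convex hull V" using neV hull_inc by fastforce
      ultimately show ?thesis using True by (intro image_eqI[of _ _ x]) auto
    next
      case False
      define u where "u v = \<mu> v / real s" for v
      have "(\<forall>v\<in>V. 0 \<le> u v) \<and> sum u V = 1" using m False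
        by (auto simp: M_def u_def simp flip: sum_divide_distrib)
      then have "(\<Sum>v\<in>V. u v *\<^sub>R v) \<in> convex hull V"
        unfolding convex_hull_finite[OF finV] by blast
      moreover have "y = real s *\<^sub>R (\<Sum>v\<in>V. u v *\<^sub>R v)"
        using False by (simp add: y u_def scaleR_sum_right)
      ultimately show ?thesis by blast
    qed
    then show "y \<in> lattice_points \<inter> (\<lambda>x. real s *\<^sub>R x) ` (convex hull V)" using m y by (simp add: M_def)
  next
    fix y assume y: "y \<in> lattice_points \<inter> (\<lambda>x. real s *\<^sub>R x) ` (convex hull V)"
    then obtain x where x: "x \<in> convex hull V" and yx: "y = real s *\<^sub>R x" by blast
    obtain u where u: "\<forall>v\<in>V. 0 \<le> u v" "sum u V = 1" "(\<Sum>v\<in>V. u v *\<^sub>R v) = x"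
      using x unfolding convex_hull_finite[OF finV] by blast
    define \<mu> where "\<mu> = restrict (\<lambda>v. real s * u v) V"
    have "(\<Sum>v\<in>V. \<mu> v *\<^sub>R v) = (\<Sum>v\<in>V. (real s * u v) *\<^sub>R v)"
      by (simp add: \<mu>_def)
    also have "\<dots> = real s *\<^sub>R (\<Sum>v\<in>V. u v *\<^sub>R v)" by (simp add: scaleR_sum_right)
    finally have s1: "(\<Sum>v\<in>V. \<mu> v *\<^sub>R v) = y" using u yx by simp
    have "\<mu> \<in> M s" using u y s1
      by (simp add: M_def \<mu>_def sum_distrib_left[symmetric])
    then show "y \<in> (\<lambda>\<mu>. \<Sum>v\<in>V. \<mu> v *\<^sub>R v) ` M s" using s1 by force
  qed
  show ?thesis using inj img by (simp add: bij_betw_def)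
qed

lemma finite_M: "finite (M s)"
proof -
  have "bounded ((\<lambda>x. real s *\<^sub>R x) ` (convex hull V))"
    using finV by (simp add: bounded_scaling compact_imp_bounded finite_imp_compact_convex_hull)
  then have "finite (lattice_points \<inter> (\<lambda>x. real s *\<^sub>R x) ` (convex hull V))"
    by (rule finite_lattice_bounded)
  then show ?thesis using M_bij[of s] bij_betw_finite by blast
qed

lemma card_M: "L (convex hull V) s = int (card (M s))"
  using M_bij[of s] by (simp add: L_def bij_betw_same_card)

definition T :: "(real ^ 'n) set \<Rightarrow> nat \<Rightarrow> ((real ^ 'n) \<Rightarrow> real) set" where
  "T W s = {\<mu> \<in> M s. \<forall>w\<in>W. \<mu> w < 1}"

definition h :: "(real ^ 'n) set \<Rightarrow> nat \<Rightarrow> int" where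
  "h W s = int (card (T W s))"

lemma finite_T: "finite (T W s)"
  using finite_M[of s] by (simp add: T_def)

lemma T_split:
  assumes "v \<in> V" "v \<notin> W"
  shows "h W s = h (insert v W) s + int (card {\<mu> \<in> T W s. 1 \<le> \<mu> v})"
proof -
  have "T W s = T (insert v W) s \<union> {\<mu> \<in> T W s. 1 \<le> \<mu> v}"
    "T (insert v W) s \<inter> {\<mu> \<in> T W s. 1 \<le> \<mu> v} = {}"
    by (auto simp: T_def)
  then have "card (T W s) = card (T (insert v W) s) + card {\<mu> \<in> T W s. 1 \<le> \<mu> v}"
    using finite_T by (metis (no_types, lifting) card_Un_disjoint finite_Un)
  then show ?thesis by (simp add: h_def)
qed

lemma T_zero:
  assumes "v \<in> V"
  shows "{\<mu> \<in> T W 0. 1 \<le> \<mu> v} = {}"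
proof -
  have *: "\<mu> v = 0" if "\<mu> \<in> M 0" for \<mu>
    using that finV assms sum_nonneg_eq_0_iff[of V \<mu>] by (auto simp: M_def)
  show ?thesis using * by (fastforce simp: T_def)
qed

lemma T_shift:
  assumes v: "v \<in> V" "v \<notin> W" and WV: "W \<subseteq> V"
  shows "card {\<mu> \<in> T W (Suc s). 1 \<le> \<mu> v} = card (T W s)"
proof -
  define d where "d x = (if x = v then 1 else (0::real))" for x
  define f where "f \<mu> = restrict (\<lambda>x. \<mu> x - d x) V" for \<mu> :: "real^'n \<Rightarrow> real"
  define g where "g \<mu> = restrict (\<lambda>x. \<mu> x + d x) V" for \<mu> :: "real^'n \<Rightarrow> real"
  have sd: "sum d V = 1" using v finV by (simp add: d_def)
  have "(\<Sum>x\<in>V. d x *\<^sub>R x) = (\<Sum>x\<in>V. if x = v then x else 0)"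
    by (rule sum.cong) (auto simp: d_def)
  then have vd: "(\<Sum>x\<in>V. d x *\<^sub>R x) = v" using v finV by simp
  have vl: "v \<in> lattice_points" using v latV by auto
  show ?thesis
  proof (rule bij_betw_same_card[of f], rule bij_betw_byWitness[of _ g])
    show "\<forall>a\<in>{\<mu> \<in> T W (Suc s). 1 \<le> \<mu> v}. g (f a) = a"
      by (auto simp: T_def M_def f_def g_def intro!: extensionalityI[of _ V])
    show "\<forall>a\<in>T W s. f (g a) = a"
      by (auto simp: T_def M_def f_def g_def intro!: extensionalityI[of _ V])
    show "f ` {\<mu> \<in> T W (Suc s). 1 \<le> \<mu> v} \<subseteq> T W s"
    proof clarify
      fix \<mu> assume m: "\<mu> \<in> T W (Suc s)" "1 \<le> \<mu> v"
      have a: "(\<Sum>x\<in>V. f \<mu> x *\<^sub>R x) = (\<Sum>x\<in>V. \<mu> x *\<^sub>R x) - v"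
        using vd by (simp add: f_def scaleR_diff_left sum_subtractf)
      have b: "sum (f \<mu>) V = sum \<mu> V - 1" using sd by (simp add: f_def sum_subtractf)
      show "f \<mu> \<in> T W s" using m v a b vl
        using WV by (auto simp: T_def M_def f_def d_def lattice_diff)
    qed
    show "g ` T W s \<subseteq> {\<mu> \<in> T W (Suc s). 1 \<le> \<mu> v}"
    proof clarify
      fix \<mu> assume m: "\<mu> \<in> T W s"
      have a: "(\<Sum>x\<in>V. g \<mu> x *\<^sub>R x) = (\<Sum>x\<in>V. \<mu> x *\<^sub>R x) + v"
        using vd by (simp add: g_def scaleR_add_left sum.distrib)
      have b: "sum (g \<mu>) V = sum \<mu> V + 1" using sd by (simp add: g_def sum.distrib)
      show "g \<mu> \<in> T W (Suc s) \<and> 1 \<le> g \<mu> v" using m v a b vl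
        using WV by (auto simp: T_def M_def g_def d_def lattice_add)
    qed
  qed
qed

lemma h_insert:
  assumes "v \<in> V" "v \<notin> W" "W \<subseteq> V"
  shows "h (insert v W) = nb (h W)"
proof
  fix s show "h (insert v W) s = nb (h W) s"
  proof (cases s)
    case 0 then show ?thesis using T_split[OF assms(1,2), of 0] T_zero[OF assms(1)] by (simp add: nb_def)
  next
    case (Suc r)
    then show ?thesis using T_split[OF assms(1,2), of s] T_shift[OF assms, of r] by (simp add: nb_def h_def)
  qed
qed

lemma h_iter: assumes "W \<subseteq> V" shows "h W = (nb ^^ card W) (h {})"
proof -
  have "finite W" using assms finV finite_subset by blast
  then show ?thesis using assms
  proof (induction W rule: finite_induct)
    case empty then show ?case by simp
  next
    case (insert v W)
    then show ?case using h_insert[of v W] by simp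
  qed
qed

lemma h_V_zero: "card V \<le> s \<Longrightarrow> h V s = 0"
proof -
  assume cs: "card V \<le> s"
  have "T V s = {}"
  proof (rule ccontr)
    assume "T V s \<noteq> {}"
    then obtain \<mu> where m: "\<mu> \<in> M s" "\<forall>w\<in>V. \<mu> w < 1" by (auto simp: T_def)
    then have "sum \<mu> V < sum (\<lambda>_. 1) V" using finV neV by (intro sum_strict_mono) auto
    then show False using m cs by (simp add: M_def)
  qed
  then show ?thesis by (simp add: h_def)
qed

lemma simplex_fd: "(fd ^^ card V) (L (convex hull V)) t = 0"
proof -
  have "L (convex hull V) = h {}" by (auto simp: card_M h_def T_def)
  then have "(fd ^^ card V) (L (convex hull V)) t = (nb ^^ card V) (h {}) (t + card V)"
    by (simp add: nb_shift)
  also have "\<dots> = h V (t + card V)" using h_iter[of V] by simp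
  also have "\<dots> = 0" by (rule h_V_zero) simp
  finally show ?thesis .
qed

end


definition good :: "nat \<Rightarrow> (nat \<Rightarrow> int) \<Rightarrow> bool" where
  "good N f \<longleftrightarrow> (\<forall>t. (fd ^^ N) f t = 0)"

lemma fd_lin: "fd (\<lambda>t. \<Sum>j\<in>J. c j * g j t) = (\<lambda>t. \<Sum>j\<in>J. c j * fd (g j) t)"
  by (auto simp: fd_def sum_subtractf right_diff_distrib)

lemma fd_iter_lin: "(fd ^^ N) (\<lambda>t. \<Sum>j\<in>J. c j * g j t) = (\<lambda>t. \<Sum>j\<in>J. c j * (fd ^^ N) (g j) t)"
proof (induction N)
  case 0 then show ?case by simp
next
  case (Suc N)
  have "(fd ^^ Suc N) (\<lambda>t. \<Sum>j\<in>J. c j * g j t) = fd ((fd ^^ N) (\<lambda>t. \<Sum>j\<in>J. c j * g j t))" by simp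
  also have "\<dots> = (\<lambda>t. \<Sum>j\<in>J. c j * fd ((fd ^^ N) (g j)) t)" by (simp only: Suc fd_lin)
  finally show ?case by simp
qed

lemma good_lin: "(\<And>j. j \<in> J \<Longrightarrow> good N (g j)) \<Longrightarrow> good N (\<lambda>t. \<Sum>j\<in>J. c j * g j t)"
  by (simp add: good_def fd_iter_lin)

lemma good_mono: assumes "\<forall>t. (fd ^^ n) f t = 0" "n \<le> N" shows "good N f"
proof -
  have z: "(fd ^^ k) (\<lambda>_. 0) = (\<lambda>_. 0)" for k
    by (induction k) (auto simp: fd_def)
  have "(fd ^^ N) f = (fd ^^ (N - n)) ((fd ^^ n) f)" using assms(2)
    by (metis funpow_add le_add_diff_inverse2 o_apply)
  also have "(fd ^^ n) f = (\<lambda>_. 0)" using assms(1) by auto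
  finally show ?thesis using z by (simp add: good_def)
qed

lemma good_congruence:
  fixes p k D :: nat
  assumes g: "good (Suc D) f" and f0: "f 0 = 1" and p: "prime p" and D: "D \<ge> 1"
    and k: "k > nat \<lfloor>log (real p) (real D)\<rfloor>"
  shows "int (p ^ (k - nat \<lfloor>log (real p) (real D)\<rfloor>)) dvd f (p ^ k) - 1"
proof -
  define l where "l = nat \<lfloor>log (real p) (real D)\<rfloor>"
  have p2: "p \<ge> 2" using p prime_ge_2_nat by blast
  have "log (real p) (real D) \<ge> 0" using D p2 by simp
  then have fl: "\<lfloor>log (real p) (real D)\<rfloor> = int l" unfolding l_def by simp
  then have Dl: "D < p ^ Suc l" using floor_log_nat_eq_powr_iff[OF p2, of D l] D by simp
  have "f (p ^ k) = (\<Sum>i<Suc D. (fd ^^ i) f 0 * int (p ^ k choose i))"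
    using g newton unfolding good_def by blast
  also have "\<dots> = f 0 + (\<Sum>i<D. (fd ^^ Suc i) f 0 * int (p ^ k choose Suc i))"
    by (simp only: sum.lessThan_Suc_shift) simp
  finally have e: "f (p ^ k) - 1 = (\<Sum>i<D. (fd ^^ Suc i) f 0 * int (p ^ k choose Suc i))"
    using f0 by simp
  have "int (p ^ (k - l)) dvd (\<Sum>i<D. (fd ^^ Suc i) f 0 * int (p ^ k choose Suc i))"
  proof (rule dvd_sum)
    fix i assume "i \<in> {..<D}"
    then have "Suc i < p ^ Suc l" using Dl by simp
    then have "p ^ (k - l) dvd (p ^ k choose Suc i)"
      using padic_binom[OF p _ _ ] k unfolding l_def by simp
    then show "int (p ^ (k - l)) dvd (fd ^^ Suc i) f 0 * int (p ^ k choose Suc i)"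
      by (metis dvd_mult int_dvd_int_iff)
  qed
  then show ?thesis using e unfolding l_def by simp
qed



fun XX :: "(real ^ 'n::finite) list \<Rightarrow> (real ^ 'n) set \<Rightarrow> (real ^ 'n) set" where
  "XX [] G = G"
| "XX (a # A) G = convex hull (insert a (XX A G))"

fun valid :: "(real ^ 'n::finite) list \<Rightarrow> (real ^ 'n) set \<Rightarrow> bool" where
  "valid [] G = True"
| "valid (a # A) G = (valid A G \<and> a \<notin> affine hull (XX A G))"

lemma XX_append: "XX (A @ B) G = XX A (XX B G)"
  by (induction A) auto

lemma valid_append: "valid (A @ B) G \<longleftrightarrow> valid B G \<and> valid A (XX B G)"
  by (induction A) (auto simp: XX_append)

lemma XX_mono: "Y \<subseteq> G \<Longrightarrow> XX A Y \<subseteq> XX A G"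
  apply (induction A)
   apply simp
  apply simp
  by (meson hull_mono insert_mono)

lemma XX_convex: "convex G \<Longrightarrow> convex (XX A G)"
  by (induction A) auto

lemma XX_compact: "compact G \<Longrightarrow> compact (XX A G)"
  by (induction A) (auto intro: compact_convex_hull)

lemma XX_nonempty: "G \<noteq> {} \<or> A \<noteq> [] \<Longrightarrow> XX A G \<noteq> {}"
  by (induction A) auto

lemma valid_mono: "valid A G \<Longrightarrow> Y \<subseteq> G \<Longrightarrow> valid A Y"
proof (induction A)
  case Nil then show ?case by simp
next
  case (Cons a A)
  then have "affine hull (XX A Y) \<subseteq> affine hull (XX A G)" by (intro hull_mono XX_mono)
  then show ?case using Cons by auto
qed

lemma XX_simplex:
  assumes "finite B" "\<not> affine_dependent B" "valid A (convex hull B)"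
  shows "XX A (convex hull B) = convex hull (set A \<union> B) \<and> \<not> affine_dependent (set A \<union> B)"
  using assms(3)
proof (induction A)
  case Nil then show ?case using assms by simp
next
  case (Cons a A)
  have v: "valid A (convex hull B)" "a \<notin> affine hull (XX A (convex hull B))" using Cons.prems by auto
  have IH: "XX A (convex hull B) = convex hull (set A \<union> B)" "\<not> affine_dependent (set A \<union> B)"
    using Cons.IH[OF v(1)] by auto
  have "XX (a # A) (convex hull B) = convex hull (insert a (XX A (convex hull B)))" by simp
  also have "\<dots> = convex hull (insert a (convex hull (set A \<union> B)))" by (simp only: IH(1))
  also have "\<dots> = convex hull (insert a (set A \<union> B))" by (rule hull_insert[symmetric])
  finally have e: "XX (a # A) (convex hull B) = convex hull (set (a # A) \<union> B)" by simp
  have "a \<notin> affine hull (set A \<union> B)" using v(2) IH(1) by simp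
  then have "\<not> affine_dependent (insert a (set A \<union> B))"
    using IH(2) affine_independent_insert by blast
  then show ?case using e by simp
qed

lemma pyr_Union:
  assumes "I \<noteq> {}" "convex (\<Union>i\<in>I. U i)" "\<And>i. i \<in> I \<Longrightarrow> convex (U i)"
  shows "convex hull (insert a (\<Union>i\<in>I. U i)) = (\<Union>i\<in>I. convex hull (insert a (U i)))"
proof (cases "(\<Union>i\<in>I. U i) = {}")
  case True
  then show ?thesis using assms(1) by auto
next
  case False
  have "convex hull (insert a (\<Union>i\<in>I. U i)) = (\<Union>x\<in>(\<Union>i\<in>I. U i). closed_segment a x)"
    using False assms(2) by (simp add: convex_hull_insert_segments hull_same)
  also have "\<dots> = (\<Union>i\<in>I. convex hull (insert a (U i)))"
  proof (intro equalityI subsetI)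
    fix y assume "y \<in> (\<Union>x\<in>(\<Union>i\<in>I. U i). closed_segment a x)"
    then obtain i x where "i \<in> I" "x \<in> U i" "y \<in> closed_segment a x" by auto
    then show "y \<in> (\<Union>i\<in>I. convex hull (insert a (U i)))"
      using assms(3) by (auto simp: convex_hull_insert_segments hull_same)
  next
    fix y assume "y \<in> (\<Union>i\<in>I. convex hull (insert a (U i)))"
    then obtain i where i: "i \<in> I" "y \<in> convex hull (insert a (U i))" by auto
    obtain i0 x0 where "i0 \<in> I" "x0 \<in> U i0" using False by auto
    then show "y \<in> (\<Union>x\<in>(\<Union>i\<in>I. U i). closed_segment a x)"
      using i assms(3)[of i] by (auto simp: convex_hull_insert_segments hull_same split: if_splits)
  qed
  finally show ?thesis .
qed

lemma seg_unique:
  fixes a :: "'a::euclidean_space"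
  assumes a: "a \<notin> affine hull Z" and y: "y \<in> Z" "y' \<in> Z"
    and x: "x \<in> closed_segment a y" "x \<in> closed_segment a y'" and xa: "x \<noteq> a"
  shows "y = y'"
proof -
  obtain s where s: "0 \<le> s" "s \<le> 1" "x = (1 - s) *\<^sub>R a + s *\<^sub>R y" using x(1) by (auto simp: in_segment)
  obtain s' where s': "0 \<le> s'" "s' \<le> 1" "x = (1 - s') *\<^sub>R a + s' *\<^sub>R y'" using x(2) by (auto simp: in_segment)
  have "s \<noteq> 0" "s' \<noteq> 0" using s s' xa by auto
  have eq: "s *\<^sub>R y - s' *\<^sub>R y' = (s - s') *\<^sub>R a"
    using s(3) s'(3) by (simp add: algebra_simps)
  show ?thesis
  proof (cases "s = s'")
    case True
    then show ?thesis using eq \<open>s \<noteq> 0\<close> by simp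
  next
    case False
    have "a = (s / (s - s')) *\<^sub>R y + (- s' / (s - s')) *\<^sub>R y'"
    proof -
      have "a = (1 / (s - s')) *\<^sub>R ((s - s') *\<^sub>R a)" using False by simp
      also have "\<dots> = (1 / (s - s')) *\<^sub>R (s *\<^sub>R y - s' *\<^sub>R y')" using eq by simp
      also have "\<dots> = (s / (s - s')) *\<^sub>R y + (- s' / (s - s')) *\<^sub>R y'"
        by (simp add: scaleR_diff_right)
      finally show ?thesis .
    qed
    moreover have "(s / (s - s')) *\<^sub>R y + (- s' / (s - s')) *\<^sub>R y' \<in> affine hull Z"
    proof (rule mem_affine[OF affine_affine_hull])
      show "y \<in> affine hull Z" using y(1) by (rule hull_inc)
      show "y' \<in> affine hull Z" using y(2) by (rule hull_inc)
      show "s / (s - s') + - s' / (s - s') = 1" using False by (simp add: divide_simps)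
    qed
    ultimately show ?thesis using a by simp
  qed
qed

lemma pyr_Inter:
  fixes a :: "'a::euclidean_space"
  assumes a: "a \<notin> affine hull Z" and J: "J \<noteq> {}"
    and W: "\<And>j. j \<in> J \<Longrightarrow> W j \<subseteq> Z \<and> convex (W j)"
  shows "(\<Inter>j\<in>J. convex hull (insert a (W j))) = convex hull (insert a (\<Inter>j\<in>J. W j))"
proof (intro equalityI subsetI)
  fix x assume "x \<in> convex hull (insert a (\<Inter>j\<in>J. W j))"
  then show "x \<in> (\<Inter>j\<in>J. convex hull (insert a (W j)))"
    using hull_mono[of "insert a (\<Inter>j\<in>J. W j)"] by blast
next
  fix x assume x: "x \<in> (\<Inter>j\<in>J. convex hull (insert a (W j)))"
  show "x \<in> convex hull (insert a (\<Inter>j\<in>J. W j))"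
  proof (cases "x = a")
    case True then show ?thesis by (simp add: hull_inc)
  next
    case False
    have ex: "\<exists>y\<in>W j. x \<in> closed_segment a y" if "j \<in> J" for j
    proof -
      have "x \<in> convex hull (insert a (W j))" using x that by blast
      then show ?thesis using False W[OF that] by (auto simp: convex_hull_insert_segments hull_same split: if_splits)
    qed
    obtain j0 where j0: "j0 \<in> J" using J by blast
    obtain y where y: "y \<in> W j0" "x \<in> closed_segment a y" using ex[OF j0] by blast
    have "y \<in> W j" if jJ: "j \<in> J" for j
    proof -
      obtain y' where y': "y' \<in> W j" "x \<in> closed_segment a y'" using ex[OF jJ] by blast
      have "y \<in> Z" using W[OF j0] y(1) by blast
      moreover have "y' \<in> Z" using W[OF jJ] y'(1) by blast
      ultimately have "y = y'" using seg_unique[OF a _ _ y(2) y'(2) False] by blast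
      with y' show ?thesis by simp
    qed
    then have yI: "y \<in> (\<Inter>j\<in>J. W j)" by blast
    then have yc: "y \<in> convex hull (\<Inter>j\<in>J. W j)" by (rule hull_inc)
    have ne: "(\<Inter>j\<in>J. W j) \<noteq> {}" using yI by blast
    show ?thesis unfolding convex_hull_insert_segments[of a "\<Inter>j\<in>J. W j"] if_not_P[OF ne]
      using yc y(2) by (rule UN_I)
  qed
qed

lemma XX_Union:
  assumes "I \<noteq> {}" "convex (\<Union>i\<in>I. Y i)" "\<And>i. i \<in> I \<Longrightarrow> convex (Y i)"
  shows "XX A (\<Union>i\<in>I. Y i) = (\<Union>i\<in>I. XX A (Y i))"
proof (induction A)
  case Nil then show ?case by simp
next
  case (Cons a A)
  have "XX (a # A) (\<Union>i\<in>I. Y i) = convex hull (insert a (\<Union>i\<in>I. XX A (Y i)))" using Cons by simp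
  also have "\<dots> = (\<Union>i\<in>I. convex hull (insert a (XX A (Y i))))"
  proof (rule pyr_Union)
    have "convex (XX A (\<Union>i\<in>I. Y i))" by (rule XX_convex[OF assms(2)])
    then show "convex (\<Union>i\<in>I. XX A (Y i))" by (simp only: Cons.IH)
  qed (use assms XX_convex in auto)
  finally show ?case by simp
qed

lemma XX_Inter:
  assumes "J \<noteq> {}" "valid A Z" "\<And>j. j \<in> J \<Longrightarrow> Y j \<subseteq> Z \<and> convex (Y j)"
  shows "(\<Inter>j\<in>J. XX A (Y j)) = XX A (\<Inter>j\<in>J. Y j)"
  using assms(2)
proof (induction A)
  case Nil then show ?case by simp
next
  case (Cons a A)
  have "(\<Inter>j\<in>J. XX (a # A) (Y j)) = (\<Inter>j\<in>J. convex hull (insert a (XX A (Y j))))" by simp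
  also have "\<dots> = convex hull (insert a (\<Inter>j\<in>J. XX A (Y j)))"
  proof (rule pyr_Inter[of a "XX A Z" J "\<lambda>j. XX A (Y j)"])
    show "a \<notin> affine hull XX A Z" using Cons.prems by simp
    show "J \<noteq> {}" by (rule assms(1))
    fix j assume "j \<in> J"
    then have "Y j \<subseteq> Z" "convex (Y j)" using assms(3) by auto
    then show "XX A (Y j) \<subseteq> XX A Z \<and> convex (XX A (Y j))" by (simp add: XX_mono XX_convex)
  qed
  also have "\<dots> = XX (a # A) (\<Inter>j\<in>J. Y j)"
  proof -
    have "valid A Z" using Cons.prems by simp
    then have "(\<Inter>j\<in>J. XX A (Y j)) = XX A (\<Inter>j\<in>J. Y j)" by (rule Cons.IH)
    then show ?thesis by simp
  qed
  finally show ?case .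
qed



lemma exit_core:
  fixes a :: "'a::real_inner"
  assumes "a \<bullet> w < b" "a \<bullet> y1 = b" "a \<bullet> y2 \<le> b" "s1 *\<^sub>R (y1 - w) = s2 *\<^sub>R (y2 - w)"
    "0 < s2" "s2 \<le> s1"
  shows "y1 = y2"
proof -
  have e: "s1 * (a \<bullet> y1 - a \<bullet> w) = s2 * (a \<bullet> y2 - a \<bullet> w)"
    using arg_cong[OF assms(4), of "\<lambda>v. a \<bullet> v"] by (simp add: inner_diff_right)
  have "s2 * (a \<bullet> y2 - a \<bullet> w) \<le> s2 * (b - a \<bullet> w)" using assms by (intro mult_left_mono) auto
  then have "s1 * (b - a \<bullet> w) \<le> s2 * (b - a \<bullet> w)" using e assms(2) by simp
  then have "s1 \<le> s2" using assms(1) by (simp add: mult_le_cancel_right)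
  then have "s1 = s2" using assms by simp
  then have "y1 - w = y2 - w" using assms(4,5) by simp
  then show ?thesis by simp
qed

lemma exit_unique:
  fixes w :: "'a::euclidean_space"
  assumes G1: "G \<subseteq> {z. a1 \<bullet> z \<le> b1}" "a1 \<bullet> w < b1" "a1 \<bullet> y1 = b1"
      and G2: "G \<subseteq> {z. a2 \<bullet> z \<le> b2}" "a2 \<bullet> w < b2" "a2 \<bullet> y2 = b2"
      and y: "y1 \<in> G" "y2 \<in> G"
      and x: "x \<in> closed_segment w y1" "x \<in> closed_segment w y2" "x \<noteq> w"
  shows "y1 = y2"
proof -
  obtain s1 where s1: "0 \<le> s1" "s1 \<le> 1" "x = (1 - s1) *\<^sub>R w + s1 *\<^sub>R y1" using x(1) by (auto simp: in_segment)
  obtain s2 where s2: "0 \<le> s2" "s2 \<le> 1" "x = (1 - s2) *\<^sub>R w + s2 *\<^sub>R y2" using x(2) by (auto simp: in_segment)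
  have "s1 \<noteq> 0" "s2 \<noteq> 0" using s1 s2 x(3) by auto
  have eq: "s1 *\<^sub>R (y1 - w) = s2 *\<^sub>R (y2 - w)"
    using s1(3) s2(3) by (simp add: algebra_simps)
  show ?thesis
  proof (cases "s2 \<le> s1")
    case True
    show ?thesis
      by (rule exit_core[OF G1(2,3) _ eq]) (use G1(1) y(2) \<open>s2 \<noteq> 0\<close> s2 True in auto)
  next
    case False
    have "y2 = y1"
      by (rule exit_core[OF G2(2,3) _ eq[symmetric]]) (use G2(1) y(1) \<open>s1 \<noteq> 0\<close> s1 False in auto)
    then show ?thesis by simp
  qed
qed

lemma exit_point:
  fixes G :: "'a::euclidean_space set"
  assumes F: "finite F" "G = affine hull G \<inter> \<Inter>F" "\<And>h. h \<in> F \<Longrightarrow> h = {z. fa h \<bullet> z \<le> fb h}"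
    and bG: "bounded G" and w: "w \<in> G" and x: "x \<in> G" "x \<noteq> w"
  shows "\<exists>h\<in>F. fa h \<bullet> w < fb h \<and> x \<in> convex hull (insert w (G \<inter> {z. fa h \<bullet> z = fb h}))"
proof -
  define d where "d = x - w"
  have d0: "d \<noteq> 0" using x by (simp add: d_def)
  have inG: "\<And>z. z \<in> G \<Longrightarrow> h \<in> F \<Longrightarrow> fa h \<bullet> z \<le> fb h" for h
    using F by blast
  have affG: "w + s *\<^sub>R d \<in> affine hull G" for s
  proof -
    have "(1 - s) *\<^sub>R w + s *\<^sub>R x \<in> affine hull G"
      by (rule mem_affine[OF affine_affine_hull]) (use w x hull_inc in auto)
    then show ?thesis by (simp add: d_def algebra_simps)
  qed
  have memG: "w + s *\<^sub>R d \<in> G" if "\<And>h. h \<in> F \<Longrightarrow> fa h \<bullet> (w + s *\<^sub>R d) \<le> fb h" for s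
  proof -
    have "w + s *\<^sub>R d \<in> \<Inter>F" using that F(3) by blast
    then show ?thesis using affG F(2) by blast
  qed
  define Hp where "Hp = {h \<in> F. fa h \<bullet> d > 0}"
  have finHp: "finite Hp" using F(1) by (simp add: Hp_def)
  have Hp_ne: "Hp \<noteq> {}"
  proof
    assume Hp0: "Hp = {}"
    obtain B where B: "\<And>z. z \<in> G \<Longrightarrow> norm z \<le> B" using bG bounded_iff by blast
    define s where "s = (B + norm w + 1) / norm d"
    have B0: "B \<ge> 0" using B[OF w] norm_ge_zero order_trans by blast
    have s0: "s \<ge> 0" using B0 by (simp add: s_def)
    have "w + s *\<^sub>R d \<in> G"
    proof (rule memG)
      fix h assume h: "h \<in> F"
      then have "fa h \<bullet> d \<le> 0" using Hp0 by (auto simp: Hp_def)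
      then have "s * (fa h \<bullet> d) \<le> 0" using s0 by (simp add: mult_nonneg_nonpos)
      moreover have "fa h \<bullet> w \<le> fb h" using inG[OF w h] .
      ultimately show "fa h \<bullet> (w + s *\<^sub>R d) \<le> fb h" by (simp add: inner_add_right)
    qed
    then have "norm (w + s *\<^sub>R d) \<le> B" by (rule B)
    moreover have "norm (s *\<^sub>R d) = B + norm w + 1" using d0 s0 B0 by (simp add: s_def)
    moreover have "norm (s *\<^sub>R d) \<le> norm (w + s *\<^sub>R d) + norm w"
      using norm_triangle_ineq4[of "w + s *\<^sub>R d" w] by simp
    ultimately show False by linarith
  qed
  define r where "r h = (fb h - fa h \<bullet> w) / (fa h \<bullet> d)" for h
  define s0 where "s0 = Min (r ` Hp)"
  have "s0 \<in> r ` Hp" unfolding s0_def using finHp Hp_ne by (intro Min_in) auto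
  then obtain h0 where h0: "h0 \<in> Hp" "r h0 = s0" by auto
  have r1: "r h \<ge> 1" if "h \<in> Hp" for h
  proof -
    have "fa h \<bullet> x \<le> fb h" using inG[OF x(1)] that by (auto simp: Hp_def)
    then have "fa h \<bullet> d \<le> fb h - fa h \<bullet> w" by (simp add: d_def inner_diff_right)
    then show ?thesis using that by (simp add: Hp_def r_def)
  qed
  have s01: "s0 \<ge> 1" using r1[OF h0(1)] unfolding h0(2) .
  have sle: "s0 \<le> r h" if "h \<in> Hp" for h
    unfolding s0_def using finHp that by (intro Min_le) auto
  have h0F: "h0 \<in> F" and pos: "fa h0 \<bullet> d > 0" using h0 by (auto simp: Hp_def)
  have h0w: "fa h0 \<bullet> w < fb h0"
  proof -
    have "(fb h0 - fa h0 \<bullet> w) / (fa h0 \<bullet> d) \<ge> 1" using r1[OF h0(1)] by (simp add: r_def)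
    then have "fb h0 - fa h0 \<bullet> w \<ge> fa h0 \<bullet> d" using pos by (simp add: le_divide_eq)
    then show ?thesis using pos by simp
  qed
  define y where "y = w + s0 *\<^sub>R d"
  have yG: "y \<in> G" unfolding y_def
  proof (rule memG)
    fix h assume h: "h \<in> F"
    show "fa h \<bullet> (w + s0 *\<^sub>R d) \<le> fb h"
    proof (cases "h \<in> Hp")
      case True
      then have p: "fa h \<bullet> d > 0" by (simp add: Hp_def)
      have "s0 * (fa h \<bullet> d) \<le> r h * (fa h \<bullet> d)" using sle[OF True] p by (simp add: mult_right_mono)
      also have "\<dots> = fb h - fa h \<bullet> w" using p by (simp add: r_def)
      finally show ?thesis by (simp add: inner_add_right)
    next
      case False
      then have "fa h \<bullet> d \<le> 0" using h by (auto simp: Hp_def)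
      then have "s0 * (fa h \<bullet> d) \<le> 0" using s01 by (simp add: mult_nonneg_nonpos)
      then show ?thesis using inG[OF w h] by (simp add: inner_add_right)
    qed
  qed
  have yh: "fa h0 \<bullet> y = fb h0"
    using pos h0(2)[symmetric] by (simp add: y_def inner_add_right r_def)
  have "x \<in> closed_segment w y"
  proof -
    have "x = (1 - 1 / s0) *\<^sub>R w + (1 / s0) *\<^sub>R y"
      using s01 by (simp add: y_def d_def algebra_simps)
    moreover have "0 \<le> 1 / s0" "1 / s0 \<le> 1" using s01 by auto
    ultimately show ?thesis unfolding in_segment(1) by blast
  qed
  moreover have "closed_segment w y \<subseteq> convex hull (insert w (G \<inter> {z. fa h0 \<bullet> z = fb h0}))"
    unfolding segment_convex_hull using yG yh by (intro hull_mono) auto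
  ultimately show ?thesis using h0F h0w by blast
qed


lemma decomp:
  fixes G :: "(real ^ 'n::finite) set"
  assumes P: "polytope G" and w: "w extreme_point_of G" and ad: "aff_dim G \<ge> 1"
  obtains \<Phi> where "finite \<Phi>" "\<Phi> \<noteq> {}"
    "\<And>C. C \<in> \<Phi> \<Longrightarrow> C face_of G \<and> C \<noteq> G \<and> w \<notin> affine hull C"
    "G = (\<Union>C\<in>\<Phi>. convex hull (insert w C))"
    "\<And>J. J \<subseteq> \<Phi> \<Longrightarrow> J \<noteq> {} \<Longrightarrow> (\<Inter>C\<in>J. convex hull (insert w C)) = convex hull (insert w (\<Inter>J))"
proof -
  have wG: "w \<in> G" using w extreme_point_of_def by blast
  have cG: "convex G" and bG: "bounded G" using P polytope_imp_convex polytope_imp_compact compact_imp_bounded by auto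
  obtain F where F: "finite F" "G = affine hull G \<inter> \<Inter>F"
    "\<forall>h\<in>F. \<exists>a b. a \<noteq> 0 \<and> h = {x. a \<bullet> x \<le> b}"
    using P polytope_imp_polyhedron polyhedron_Int_affine by metis
  obtain fa fb where fab: "\<And>h. h \<in> F \<Longrightarrow> h = {z. fa h \<bullet> z \<le> fb h}"
    using F(3) by metis
  have inG: "G \<subseteq> {z. fa h \<bullet> z \<le> fb h}" if "h \<in> F" for h
    using F(2) fab[OF that] that by blast
  define H where "H = {h \<in> F. fa h \<bullet> w < fb h}"
  define C where "C h = G \<inter> {z. fa h \<bullet> z = fb h}" for h
  define \<Phi> where "\<Phi> = C ` H"
  have H: "h \<in> F" "fa h \<bullet> w < fb h" if "h \<in> H" for h using that by (auto simp: H_def)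
  have cover: "\<exists>h\<in>H. x \<in> convex hull (insert w (C h))" if "x \<in> G" "x \<noteq> w" for x
    using exit_point[OF F(1,2) fab bG wG that] by (auto simp: H_def C_def)
  show ?thesis
  proof
    show "finite \<Phi>" using F(1) by (simp add: \<Phi>_def H_def)
    obtain x where "x \<in> G" "x \<noteq> w"
    proof (rule ccontr)
      assume "\<not> thesis"
      with that have "G \<subseteq> {w}" by blast
      then have "aff_dim G \<le> aff_dim {w}" by (rule aff_dim_subset)
      then show False using ad by simp
    qed
    then show "\<Phi> \<noteq> {}" using cover by (auto simp: \<Phi>_def)
  next
    fix D assume "D \<in> \<Phi>"
    then obtain h where h: "h \<in> H" "D = C h" by (auto simp: \<Phi>_def)
    have face: "D face_of G" unfolding h C_def
      using inG[OF H(1)[OF h(1)]] cG by (intro face_of_Int_supporting_hyperplane_le) auto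
    have "affine hull D \<subseteq> {z. fa h \<bullet> z = fb h}"
      by (rule hull_minimal) (auto simp: h C_def affine_hyperplane)
    then have "w \<notin> affine hull D" using H(2)[OF h(1)] by auto
    moreover have "w \<notin> D" using H(2)[OF h(1)] by (auto simp: h C_def)
    then have "D \<noteq> G" using wG by blast
    ultimately show "D face_of G \<and> D \<noteq> G \<and> w \<notin> affine hull D" using face by blast
  next
    show "G = (\<Union>D\<in>\<Phi>. convex hull (insert w D))"
    proof (intro equalityI subsetI)
      fix x assume x: "x \<in> G"
      show "x \<in> (\<Union>D\<in>\<Phi>. convex hull (insert w D))"
      proof (cases "x = w")
        case True
        obtain x' where "x' \<in> G" "x' \<noteq> w"
        proof (rule ccontr)
          assume "\<not> thesis"
          with that have "G \<subseteq> {w}" by blast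
          then have "aff_dim G \<le> aff_dim {w}" by (rule aff_dim_subset)
          then show False using ad by simp
        qed
        then obtain h where "h \<in> H" using cover by blast
        then show ?thesis using True by (auto simp: \<Phi>_def intro: hull_inc)
      next
        case False
        then show ?thesis using cover[OF x] by (auto simp: \<Phi>_def)
      qed
    next
      fix x assume "x \<in> (\<Union>D\<in>\<Phi>. convex hull (insert w D))"
      then obtain D where D: "D \<in> \<Phi>" "x \<in> convex hull (insert w D)" by blast
      have "insert w D \<subseteq> G" using D(1) wG by (auto simp: \<Phi>_def C_def)
      then have "convex hull (insert w D) \<subseteq> G" using cG by (simp add: hull_minimal)
      then show "x \<in> G" using D by blast
    qed
  next
    fix J assume J: "J \<subseteq> \<Phi>" "J \<noteq> {}"
    show "(\<Inter>D\<in>J. convex hull (insert w D)) = convex hull (insert w (\<Inter>J))"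
    proof (intro equalityI subsetI)
      fix x assume "x \<in> convex hull (insert w (\<Inter>J))"
      then show "x \<in> (\<Inter>D\<in>J. convex hull (insert w D))"
        using hull_mono[of "insert w (\<Inter>J)"] by blast
    next
      fix x assume x: "x \<in> (\<Inter>D\<in>J. convex hull (insert w D))"
      show "x \<in> convex hull (insert w (\<Inter>J))"
      proof (cases "x = w")
        case True then show ?thesis by (simp add: hull_inc)
      next
        case False
        have ex: "\<exists>h\<in>H. D = C h \<and> (\<exists>y\<in>D. x \<in> closed_segment w y)" if DJ: "D \<in> J" for D
        proof -
          obtain h where h: "h \<in> H" "D = C h" using J(1) DJ by (auto simp: \<Phi>_def)
          have cD: "convex D" unfolding h C_def using cG by (simp add: convex_Int convex_hyperplane)
          have "x \<in> convex hull (insert w D)" using x DJ by blast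
          then have "\<exists>y\<in>D. x \<in> closed_segment w y" using False cD
            by (auto simp: convex_hull_insert_segments hull_same split: if_splits)
          then show ?thesis using h by blast
        qed
        obtain D0 where D0: "D0 \<in> J" using J(2) by blast
        obtain h0 y0 where h0: "h0 \<in> H" "D0 = C h0" "y0 \<in> D0" "x \<in> closed_segment w y0"
          using ex[OF D0] by blast
        have "y0 \<in> D" if DJ: "D \<in> J" for D
        proof -
          obtain h y where hy: "h \<in> H" "D = C h" "y \<in> D" "x \<in> closed_segment w y" using ex[OF DJ] by blast
          have "y0 = y"
          proof (rule exit_unique[of G "fa h0" "fb h0" w y0 "fa h" "fb h" y x])
            show "G \<subseteq> {z. fa h0 \<bullet> z \<le> fb h0}" using inG H h0 by blast
            show "G \<subseteq> {z. fa h \<bullet> z \<le> fb h}" using inG H hy by blast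
          qed (use H h0 hy False in \<open>auto simp: C_def\<close>)
          then show ?thesis using hy by simp
        qed
        then have y0J: "y0 \<in> \<Inter>J" by blast
        have "closed_segment w y0 \<subseteq> convex hull (insert w (\<Inter>J))"
          unfolding segment_convex_hull using y0J by (intro hull_mono) auto
        then show ?thesis using h0(4) by blast
      qed
    qed
  qed
qed

lemma inj_scale: "t \<noteq> (0::nat) \<Longrightarrow> inj_on (\<lambda>x::real^'n::finite. real t *\<^sub>R x) UNIV"
  by (rule inj_onI) simp

lemma good_union:
  fixes S :: "'i \<Rightarrow> (real ^ 'n::finite) set"
  assumes I: "finite I" "I \<noteq> {}" and bS: "\<And>i. i \<in> I \<Longrightarrow> bounded (S i)"
    and J: "\<And>J. J \<subseteq> I \<Longrightarrow> J \<noteq> {} \<Longrightarrow> (\<Inter>i\<in>J. S i) \<noteq> {} \<and> good N (L (\<Inter>i\<in>J. S i))"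
  shows "good N (L (\<Union>i\<in>I. S i))"
proof -
  interpret Incl_Excl finite "int o card"
    by unfold_locales (auto simp add: card_Un_disjnt)
  have ne: "S i \<noteq> {}" if "i \<in> I" for i using J[of "{i}"] that by auto
  have eq: "L (\<Union>i\<in>I. S i) t = (\<Sum>K | K \<subseteq> I \<and> K \<noteq> {}. (- 1) ^ (card K + 1) * L (\<Inter>i\<in>K. S i) t)" for t
  proof -
    define X where "X i = lattice_points \<inter> (\<lambda>x. real t *\<^sub>R x) ` S i" for i
    have finX: "finite (X i)" if "i \<in> I" for i
      unfolding X_def using bS[OF that] by (intro finite_lattice_bounded bounded_scaling)
    have U: "lattice_points \<inter> (\<lambda>x. real t *\<^sub>R x) ` (\<Union>i\<in>I. S i) = (\<Union>i\<in>I. X i)"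
      by (auto simp: X_def)
    have IK: "(\<Inter>i\<in>K. X i) = lattice_points \<inter> (\<lambda>x. real t *\<^sub>R x) ` (\<Inter>i\<in>K. S i)"
      if K: "K \<subseteq> I" "K \<noteq> {}" for K
    proof (cases "t = 0")
      case True
      have z: "(\<lambda>x. real t *\<^sub>R x) ` S i = {0}" if "i \<in> I" for i using ne[OF that] True by auto
      have "(\<lambda>x. real t *\<^sub>R x) ` (\<Inter>i\<in>K. S i) = {0}" using J[OF K] True by auto
      moreover have "(\<Inter>i\<in>K. X i) = (\<Inter>i\<in>K. lattice_points \<inter> {0})"
        by (rule INF_cong[OF refl]) (use z K in \<open>auto simp: X_def\<close>)
      ultimately show ?thesis using K by simp
    next
      case False
      have inj: "inj_on (\<lambda>x::real^'n. real t *\<^sub>R x) UNIV" by (rule inj_scale[OF False])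
      obtain k where "k \<in> K" using K by blast
      have "(\<lambda>x. real t *\<^sub>R x) ` (\<Inter>i\<in>K. S i) = (\<Inter>i\<in>K. (\<lambda>x. real t *\<^sub>R x) ` S i)"
        using image_INT[OF inj _ \<open>k \<in> K\<close>, of S] by simp
      then show ?thesis using K unfolding X_def by auto
    qed
    have "int (card (\<Union>i\<in>I. X i)) = (\<Sum>K | K \<subseteq> I \<and> K \<noteq> {}. (- 1) ^ (card K + 1) * int (card (\<Inter>i\<in>K. X i)))"
      using restricted_indexed[OF I(1), of X] finX by simp
    also have "\<dots> = (\<Sum>K | K \<subseteq> I \<and> K \<noteq> {}. (- 1) ^ (card K + 1) * L (\<Inter>i\<in>K. S i) t)"
      by (rule sum.cong) (auto simp: IK L_def)
    finally show ?thesis by (simp add: L_def U)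
  qed
  have "good N (\<lambda>t. \<Sum>K | K \<subseteq> I \<and> K \<noteq> {}. (- 1) ^ (card K + 1) * L (\<Inter>i\<in>K. S i) t)"
    by (rule good_lin) (use J in auto)
  moreover have "L (\<Union>i\<in>I. S i) = (\<lambda>t. \<Sum>K | K \<subseteq> I \<and> K \<noteq> {}. (- 1) ^ (card K + 1) * L (\<Inter>i\<in>K. S i) t)"
    using eq by blast
  ultimately show ?thesis by simp
qed

definition lp :: "(real ^ 'n::finite) set \<Rightarrow> bool" where
  "lp G \<longleftrightarrow> polytope G \<and> (\<forall>v. v extreme_point_of G \<longrightarrow> v \<in> lattice_points)"

lemma base_case:
  fixes G :: "(real ^ 'n::finite) set"
  assumes "lp G" "aff_dim G \<le> 0" "set A \<subseteq> lattice_points" "valid A G" "XX A G \<noteq> {}"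
  shows "good (Suc CARD('n)) (L (XX A G))"
proof -
  obtain B where B: "G = convex hull B" "finite B" "\<not> affine_dependent B" "B \<subseteq> lattice_points"
  proof (cases "G = {}")
    case True then show ?thesis using that[of "{}"] by simp
  next
    case False
    then have "aff_dim G \<noteq> -1" using aff_dim_empty by blast
    then have "aff_dim G = 0" using assms(2) aff_dim_geq[of G] by linarith
    then obtain g where g: "G = {g}" using aff_dim_eq_0 by blast
    then have "g \<in> lattice_points" using assms(1) by (simp add: lp_def)
    then show ?thesis using that[of "{g}"] g by simp
  qed
  define V where "V = set A \<union> B"
  have XV: "XX A G = convex hull V" "\<not> affine_dependent V"
    using XX_simplex[OF B(2,3), of A] assms(4) B(1) by (auto simp: V_def)
  have fV: "finite V" using B(2) by (simp add: V_def)
  have nV: "V \<noteq> {}" using XV(1) assms(5) by auto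
  have lV: "V \<subseteq> lattice_points" using B(4) assms(3) by (simp add: V_def)
  have cV: "card V \<le> Suc CARD('n)"
  proof (rule ccontr)
    assume "\<not> ?thesis"
    then have "card V \<ge> DIM(real ^ 'n) + 2" by simp
    then have "affine_dependent V" using affine_dependent_biggerset[OF fV] by blast
    then show False using XV(2) by simp
  qed
  show ?thesis unfolding XV(1)
    by (rule good_mono[OF _ cV]) (use simplex_fd[OF fV nV XV(2) lV] in blast)
qed

lemma main:
  fixes n :: nat
  shows "\<forall>(G :: (real ^ 'n::finite) set) A. lp G \<longrightarrow> aff_dim G \<le> int n \<longrightarrow> set A \<subseteq> lattice_points
     \<longrightarrow> valid A G \<longrightarrow> XX A G \<noteq> {} \<longrightarrow> good (Suc CARD('n)) (L (XX A G))"
proof (induction n)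
  case 0
  then show ?case using base_case by auto
next
  case (Suc m)
  show ?case
  proof (intro allI impI)
    fix G :: "(real ^ 'n) set" and A
    assume a: "lp G" "aff_dim G \<le> int (Suc m)" "set A \<subseteq> lattice_points" "valid A G" "XX A G \<noteq> {}"
    show "good (Suc CARD('n)) (L (XX A G))"
    proof (cases "aff_dim G \<le> 0")
      case True then show ?thesis using base_case a by blast
    next
      case False
      then have ad: "aff_dim G \<ge> 1" by simp
      have P: "polytope G" using a(1) by (simp add: lp_def)
      have cG: "convex G" "compact G" using P polytope_imp_convex polytope_imp_compact by auto
      have "G \<noteq> {}" using ad by auto
      then obtain w where w: "w extreme_point_of G"
        using Krein_Milman_Minkowski[OF cG(2,1)] by fastforce
      have wG: "w \<in> G" using w extreme_point_of_def by blast
      have wl: "w \<in> lattice_points" using a(1) w by (simp add: lp_def)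
      obtain \<Phi> where \<Phi>: "finite \<Phi>" "\<Phi> \<noteq> {}"
        "\<And>C. C \<in> \<Phi> \<Longrightarrow> C face_of G \<and> C \<noteq> G \<and> w \<notin> affine hull C"
        "G = (\<Union>C\<in>\<Phi>. convex hull (insert w C))"
        "\<And>J. J \<subseteq> \<Phi> \<Longrightarrow> J \<noteq> {} \<Longrightarrow> (\<Inter>C\<in>J. convex hull (insert w C)) = convex hull (insert w (\<Inter>J))"
        using decomp[OF P w ad] by blast
      have sub: "convex hull (insert w C) \<subseteq> G" if "C \<in> \<Phi>" for C
        using \<Phi>(3)[OF that] wG cG(1) face_of_imp_subset by (metis hull_minimal insert_subset)
      have cvx: "convex (convex hull (insert w C))" for C by simp
      define S where "S C = XX A (convex hull (insert w C))" for C
      have U: "XX A G = (\<Union>C\<in>\<Phi>. S C)"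
      proof -
        have "XX A G = XX A (\<Union>C\<in>\<Phi>. convex hull (insert w C))" using \<Phi>(4) by simp
        also have "\<dots> = (\<Union>C\<in>\<Phi>. S C)" unfolding S_def
          by (rule XX_Union) (use \<Phi>(2,4) cG(1) in auto)
        finally show ?thesis .
      qed
      have "good (Suc CARD('n)) (L (\<Union>C\<in>\<Phi>. S C))"
      proof (rule good_union[OF \<Phi>(1,2)])
        fix C assume "C \<in> \<Phi>"
        have "compact C" using face_of_polytope_polytope[OF P] \<Phi>(3)[OF \<open>C \<in> \<Phi>\<close>] polytope_imp_compact by blast
        then have "compact (convex hull (insert w C))" by (intro compact_convex_hull compact_insert)
        then show "bounded (S C)" unfolding S_def by (intro compact_imp_bounded XX_compact)
      next
        fix J assume J: "J \<subseteq> \<Phi>" "J \<noteq> {}"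
        have "(\<Inter>C\<in>J. S C) = XX A (\<Inter>C\<in>J. convex hull (insert w C))" unfolding S_def
          by (rule XX_Inter[OF J(2) a(4)]) (use J(1) sub in auto)
        also have "\<dots> = XX (A @ [w]) (\<Inter>J)" using \<Phi>(5)[OF J] by (simp add: XX_append)
        finally have e: "(\<Inter>C\<in>J. S C) = XX (A @ [w]) (\<Inter>J)" .
        have faceJ: "(\<Inter>J) face_of G" using J \<Phi>(3) by (intro face_of_Inter) auto
        obtain C0 where C0: "C0 \<in> J" using J by blast
        have "aff_dim (\<Inter>J) \<le> aff_dim C0" using C0 by (intro aff_dim_subset) auto
        also have "aff_dim C0 < aff_dim G" using \<Phi>(3)[of C0] C0 J(1) cG(1) face_of_aff_dim_lt by blast
        finally have adJ: "aff_dim (\<Inter>J) \<le> int m" using a(2) by simp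
        have lpJ: "lp (\<Inter>J)" unfolding lp_def
        proof
          show "polytope (\<Inter>J)" using face_of_polytope_polytope[OF P faceJ] .
          show "\<forall>v. v extreme_point_of \<Inter>J \<longrightarrow> v \<in> lattice_points"
            using extreme_point_of_face[OF faceJ] a(1) by (auto simp: lp_def)
        qed
        have "affine hull (\<Inter>J) \<subseteq> affine hull C0" using C0 by (intro hull_mono) auto
        then have wnot: "w \<notin> affine hull (\<Inter>J)" using \<Phi>(3)[of C0] C0 J(1) by blast
        have "convex hull (insert w (\<Inter>J)) \<subseteq> G"
          using sub[of C0] C0 J(1) hull_mono[of "insert w (\<Inter>J)" "insert w C0"] by blast
        then have vJ: "valid (A @ [w]) (\<Inter>J)"
          using wnot valid_mono[OF a(4)] by (simp add: valid_append)
        have neJ: "XX (A @ [w]) (\<Inter>J) \<noteq> {}" by (rule XX_nonempty) simp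
        have "good (Suc CARD('n)) (L (XX (A @ [w]) (\<Inter>J)))"
          using Suc.IH lpJ adJ a(3) wl vJ neJ by auto
        then show "(\<Inter>C\<in>J. S C) \<noteq> {} \<and> good (Suc CARD('n)) (L (\<Inter>C\<in>J. S C))"
          using e neJ by simp
      qed
      then show ?thesis using U by simp
    qed
  qed
qed


theorem lemma1:
  fixes P :: "(real ^ 'n::finite) set" and p k :: nat
  assumes "polytope P" and "P \<noteq> {}"
    and "\<forall>v. v extreme_point_of P \<longrightarrow> v \<in> lattice_points"
    and "prime p"
    and "k > nat \<lfloor>log (real p) (real CARD('n))\<rfloor>"
  shows "[card (lattice_points \<inter> ((\<lambda>x. (real p ^ k) *\<^sub>R x) ` P)) = 1]
           (mod p ^ (k - nat \<lfloor>log (real p) (real CARD('n))\<rfloor>))"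
proof -
  have lpP: "lp P" using assms(1,3) by (simp add: lp_def)
  have "aff_dim P \<le> int CARD('n)" using aff_dim_le_DIM[of P] by simp
  moreover have "lp P \<longrightarrow> aff_dim P \<le> int CARD('n) \<longrightarrow> set ([]::(real^'n) list) \<subseteq> lattice_points
      \<longrightarrow> valid [] P \<longrightarrow> XX [] P \<noteq> {} \<longrightarrow> good (Suc CARD('n)) (L (XX [] P))"
    using main[of "CARD('n)"] by blast
  ultimately have g: "good (Suc CARD('n)) (L P)" using lpP assms(2) by simp
  have "(\<lambda>x. real 0 *\<^sub>R x) ` P = {0}" using assms(2) by auto
  moreover have "lattice_points \<inter> {0} = {0::real^'n}" using lattice_zero by blast
  ultimately have f0: "L P 0 = 1" by (simp add: L_def)
  have D1: "CARD('n) \<ge> 1" by (simp add: Suc_leI)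
  have dv: "int (p ^ (k - nat \<lfloor>log (real p) (real CARD('n))\<rfloor>)) dvd L P (p ^ k) - 1"
    by (rule good_congruence[OF g f0 assms(4) D1 assms(5)])
  have "L P (p ^ k) = int (card (lattice_points \<inter> ((\<lambda>x. (real p ^ k) *\<^sub>R x) ` P)))"
    by (simp add: L_def)
  with dv have "[int (card (lattice_points \<inter> ((\<lambda>x. (real p ^ k) *\<^sub>R x) ` P))) = int 1]
      (mod int (p ^ (k - nat \<lfloor>log (real p) (real CARD('n))\<rfloor>)))"
    by (simp add: cong_iff_dvd_diff)
  then show ?thesis by (simp only: cong_int_iff)
qed


end
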